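(* Consider the following binary classification model of feature learning. Let $p_d\in[0,1]$, $p_r=1-p_d$, and let $t_d,t_r,n_d,n_r,c_d,c_r$ be nonnegative integers with $n_d\le t_d$, $n_r\le t_r$, $c_d\le t_d$, $c_r\le t_r$. Set $c = 2(c_d+c_r)$. Each class $y\in\{1,2\}$ has its own set $D_y$ of $t_d$ dominant features and its own set $R_y$ of $t_r$ rare features, all these sets being pairwise disjoint. **Data.** A data point $(x,y)$ is generated as follows: $y$ is uniform on $\{1,2\}$; with probability $p_d$ the feature set $\Pi(x)$ is a uniformly random $n_d$-subset of $D_y$, and otherwise it is a uniformly random $n_r$-subset of $R_y$. **Models.** A model $f$ is drawn independently of the data by choosing, for each class $y$, a uniformly random $c_d$-subset of $D_y$ and a uniformly random $c_r$-subset of $R_y$, all choices independent; $\Pi(f)$ is the union of these subsets. A model is correct on $(x,y)$ (predicts $y$) if $\Pi(f)\cap\Pi(x)\ne\varnothing$. **Agreement.** Let $\zeta:\mathbb{N}\times\mathbb{N}\to[0,1]$ be an agreement function. Draw two models $f,g$ i.i.d. from this distribution, independent of $(x,y)$, and let $k$ be the number of features of class $y$ that $f$ and $g$ share, i.e. $k = |\Pi(f)\cap\Pi(g)\cap(D_y\cup R_y)|$. The predictions of $f$ and $g$ on $(x,y)$ are as follows: - If both $f$ and $g$ share a feature with $x$, both predict $y$ and so agree. - If exactly one shares a feature with $x$, the other guesses uniformly at random, independently, so they agree with probability $\frac12$. - If neither shares a feature with $x$, they agree with probability $\zeta(k,c)$ when $k\ge1$, and with probability $\frac12$ (independent uniform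 guesses) when $k=0$. With the convention $\binom{n}{r}=0$ when $n<0$, $r<0$ or $n<r$, let $$q_1 = p_d\left(1-\frac{\binom{t_d-c_d}{n_d}}{\binom{t_d}{n_d}}\right)^2 + p_r\left(1-\frac{\binom{t_r-c_r}{n_r}}{\binom{t_r}{n_r}}\right)^2,$$ $$\begin{aligned}q_2(k) = {}& p_d\frac{\binom{t_d-n_d}{c_d}^2}{\binom{t_d}{c_d}^2}\left(\sum_{a+b=k}\frac{\binom{c_d}{a}\binom{t_d-n_d-c_d}{c_d-a}}{\binom{t_d-n_d}{c_d}}\frac{\binom{c_r}{b}\binom{t_r-c_r}{c_r-b}}{\binom{t_r}{c_r}}\right)\\ &+ p_r\frac{\binom{t_r-n_r}{c_r}^2}{\binom{t_r}{c_r}^2}\left(\sum_{a+b=k}\frac{\binom{c_d}{a}\binom{t_d-c_d}{c_d-a}}{\binom{t_d}{c_d}}\frac{\binom{c_r}{b}\binom{t_r-n_r-c_r}{c_r-b}}{\binom{t_r-n_r}{c_r}}\right),\end{aligned}$$ where the sums range over nonnegative integers $a,b$. Then the expected agreement (probability that $f$ and $g$ output the same label on $(x,y)$, over the data, the pair of models and the random guesses) is $$\mathsf{Agr} = \frac12 + \frac12 q_1 + \sum_{k=1}^{c}\left(\zeta(k,c)-\frac12\right)q_2(k).$$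
   Context: In the paper, $c$ is the total model capacity, with $c_d=\frac12 p_d c$ and $c_r=\frac12 p_r c$ rounded to integers so that the total number of features in a model is $c$. The paper describes $\zeta(k,c)$ informally as the probability that two models that both lack any feature of $x$ agree, given that they share $k$ features. Here $k$ is made precise as the number of shared features of $x$'s class, which is the quantity the formula for $q_2(k)$ counts. *)

theory Defs
  imports "HOL-Probability.Probability"
begin

definition bnm :: "int \<Rightarrow> int \<Rightarrow> real" where
  "bnm n r = (if n < 0 \<or> r < 0 \<or> n < r then 0 else real (nat n choose nat r))"

definition subsets_of_card :: "'a set \<Rightarrow> nat \<Rightarrow> 'a set set" where
  "subsets_of_card A m = {S. S \<subseteq> A \<and> card S = m}"

definition data_pmf ::
  "real \<Rightarrow> (nat \<Rightarrow> 'a set) \<Rightarrow> (nat \<Rightarrow> 'a set) \<Rightarrow> nat \<Rightarrow> nat \<Rightarrow> ('a set \<times> nat) pmf" where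
  "data_pmf pd D R nd nr =
     do { y \<leftarrow> pmf_of_set {1, 2::nat};
          dom \<leftarrow> bernoulli_pmf pd;
          X \<leftarrow> (if dom then pmf_of_set (subsets_of_card (D y) nd)
                else pmf_of_set (subsets_of_card (R y) nr));
          return_pmf (X, y) }"

definition model_pmf ::
  "(nat \<Rightarrow> 'a set) \<Rightarrow> (nat \<Rightarrow> 'a set) \<Rightarrow> nat \<Rightarrow> nat \<Rightarrow> 'a set pmf" where
  "model_pmf D R cd cr =
     do { A1 \<leftarrow> pmf_of_set (subsets_of_card (D 1) cd);
          A2 \<leftarrow> pmf_of_set (subsets_of_card (D 2) cd);
          B1 \<leftarrow> pmf_of_set (subsets_of_card (R 1) cr);
          B2 \<leftarrow> pmf_of_set (subsets_of_card (R 2) cr);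
          return_pmf (A1 \<union> A2 \<union> B1 \<union> B2) }"

text \<open>Conditional probability (over the random guesses) that two models with
  feature sets F, G agree on data point (X, y).\<close>
definition agree_prob ::
  "(nat \<Rightarrow> nat \<Rightarrow> real) \<Rightarrow> nat \<Rightarrow> (nat \<Rightarrow> 'a set) \<Rightarrow> (nat \<Rightarrow> 'a set) \<Rightarrow>
   'a set \<Rightarrow> nat \<Rightarrow> 'a set \<Rightarrow> 'a set \<Rightarrow> real" where
  "agree_prob \<zeta> c D R X y F G =
     (if F \<inter> X \<noteq> {} \<and> G \<inter> X \<noteq> {} then 1
      else if F \<inter> X \<noteq> {} \<or> G \<inter> X \<noteq> {} then 1/2
      else (let k = card (F \<inter> G \<inter> (D y \<union> R y)) in
            if k \<ge> 1 then \<zeta> k c else 1/2))"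

definition Agr ::
  "(nat \<Rightarrow> nat \<Rightarrow> real) \<Rightarrow> real \<Rightarrow> (nat \<Rightarrow> 'a set) \<Rightarrow> (nat \<Rightarrow> 'a set) \<Rightarrow>
   nat \<Rightarrow> nat \<Rightarrow> nat \<Rightarrow> nat \<Rightarrow> real" where
  "Agr \<zeta> pd D R nd nr cd cr =
     measure_pmf.expectation
       (pair_pmf (data_pmf pd D R nd nr) (pair_pmf (model_pmf D R cd cr) (model_pmf D R cd cr)))
       (\<lambda>((X, y), (F, G)). agree_prob \<zeta> (2 * (cd + cr)) D R X y F G)"

definition q1 :: "real \<Rightarrow> int \<Rightarrow> int \<Rightarrow> int \<Rightarrow> int \<Rightarrow> int \<Rightarrow> int \<Rightarrow> real" where
  "q1 pd td tr nd nr cd cr =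
     pd * (1 - bnm (td - cd) nd / bnm td nd)^2
     + (1 - pd) * (1 - bnm (tr - cr) nr / bnm tr nr)^2"

definition q2 :: "real \<Rightarrow> int \<Rightarrow> int \<Rightarrow> int \<Rightarrow> int \<Rightarrow> int \<Rightarrow> int \<Rightarrow> nat \<Rightarrow> real" where
  "q2 pd td tr nd nr cd cr k =
     pd * (bnm (td - nd) cd)^2 / (bnm td cd)^2 *
       (\<Sum>a\<in>{0..k}. let b = k - a in
          bnm cd (int a) * bnm (td - nd - cd) (cd - int a) / bnm (td - nd) cd *
          (bnm cr (int b) * bnm (tr - cr) (cr - int b) / bnm tr cr))
     + (1 - pd) * (bnm (tr - nr) cr)^2 / (bnm tr cr)^2 *
       (\<Sum>a\<in>{0..k}. let b = k - a in
          bnm cd (int a) * bnm (td - cd) (cd - int a) / bnm td cd *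
          (bnm cr (int b) * bnm (tr - nr - cr) (cr - int b) / bnm (tr - nr) cr))"

end

theory Submission
  imports Defs
begin

lemma U_finite: "finite A \<Longrightarrow> finite (subsets_of_card A m)"
  unfolding subsets_of_card_def by (rule finite_subset[of _ "Pow A"]) auto

lemma U_card: "finite A \<Longrightarrow> card (subsets_of_card A m) = card A choose m"
  unfolding subsets_of_card_def by (rule n_subsets)

lemma U_ne: "finite A \<Longrightarrow> m \<le> card A \<Longrightarrow> subsets_of_card A m \<noteq> {}"
  unfolding subsets_of_card_def using obtain_subset_with_card_n[of m A] by blast

lemma count_inter:
  assumes B: "finite B" and SB: "S \<subseteq> B" and cS: "card S = m"
  shows "card {T \<in> subsets_of_card B m. card (S \<inter> T) = a} = (m choose a) * ((card B - m) choose (m - a))"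
proof (cases "a \<le> m")
  case True
  have fS: "finite S" using B SB finite_subset by blast
  have "bij_betw (\<lambda>T. (S \<inter> T, T - S)) {T \<in> subsets_of_card B m. card (S \<inter> T) = a}
          (subsets_of_card S a \<times> subsets_of_card (B - S) (m - a))"
  proof (rule bij_betw_byWitness[where f'="\<lambda>(P,Q). P \<union> Q"])
    show "\<forall>T\<in>{T \<in> subsets_of_card B m. card (S \<inter> T) = a}. (case (S \<inter> T, T - S) of (P, Q) \<Rightarrow> P \<union> Q) = T"
      by auto
    show "\<forall>a'\<in>subsets_of_card S a \<times> subsets_of_card (B - S) (m - a). (S \<inter> (case a' of (P, Q) \<Rightarrow> P \<union> Q), (case a' of (P, Q) \<Rightarrow> P \<union> Q) - S) = a'"
      unfolding subsets_of_card_def by auto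
    show "(\<lambda>T. (S \<inter> T, T - S)) ` {T \<in> subsets_of_card B m. card (S \<inter> T) = a} \<subseteq> subsets_of_card S a \<times> subsets_of_card (B - S) (m - a)"
    proof safe
      fix T assume T: "T \<in> subsets_of_card B m" "a = card (S \<inter> T)"
      have fT: "finite T" using T B unfolding subsets_of_card_def using finite_subset by blast
      show "S \<inter> T \<in> subsets_of_card S (card (S \<inter> T))" unfolding subsets_of_card_def by auto
      have "card (T - S) = card T - card (T \<inter> S)" using fT by (simp add: card_Diff_subset_Int)
      then show "T - S \<in> subsets_of_card (B - S) (m - card (S \<inter> T))"
        using T unfolding subsets_of_card_def by (auto simp: Int_commute)
    qed
    show "(\<lambda>(P, Q). P \<union> Q) ` (subsets_of_card S a \<times> subsets_of_card (B - S) (m - a)) \<subseteq> {T \<in> subsets_of_card B m. card (S \<inter> T) = a}"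
    proof safe
      fix P Q assume P: "P \<in> subsets_of_card S a" and Q: "Q \<in> subsets_of_card (B - S) (m - a)"
      have fP: "finite P" using P fS unfolding subsets_of_card_def using finite_subset by blast
      have fQ: "finite Q" using Q B unfolding subsets_of_card_def using finite_subset by blast
      have d: "P \<inter> Q = {}" using P Q unfolding subsets_of_card_def by auto
      have "card (P \<union> Q) = m" using card_Un_disjoint[OF fP fQ d] P Q True unfolding subsets_of_card_def by auto
      then show "P \<union> Q \<in> subsets_of_card B m" using P Q SB unfolding subsets_of_card_def by auto
      have "S \<inter> (P \<union> Q) = P" using P Q unfolding subsets_of_card_def by auto
      then show "card (S \<inter> (P \<union> Q)) = a" using P unfolding subsets_of_card_def by auto
    qed
  qed
  then have "card {T \<in> subsets_of_card B m. card (S \<inter> T) = a} = card (subsets_of_card S a) * card (subsets_of_card (B - S) (m - a))"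
    by (simp add: bij_betw_same_card card_cartesian_product)
  also have "\<dots> = (m choose a) * ((card B - m) choose (m - a))"
    using fS B SB cS by (simp add: U_card card_Diff_subset)
  finally show ?thesis .
next
  case False
  have fS: "finite S" using B SB finite_subset by blast
  have E: "{T \<in> subsets_of_card B m. card (S \<inter> T) = a} = {}"
    using False card_mono[OF fS, of "S \<inter> _"] cS by fastforce
  show ?thesis unfolding E using False by simp
qed

lemma fibre:
  assumes B: "finite B"
  shows "(\<Sum>A\<in>subsets_of_card B m. \<Sum>A'\<in>subsets_of_card B m. (\<phi> (card (A \<inter> A')) :: real))
       = (\<Sum>a\<le>m. real ((card B choose m) * (m choose a) * ((card B - m) choose (m - a))) * \<phi> a)"
proof -
  have inner: "(\<Sum>A'\<in>subsets_of_card B m. \<phi> (card (A \<inter> A')))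
      = (\<Sum>a\<le>m. real ((m choose a) * ((card B - m) choose (m - a))) * \<phi> a)"
    if A: "A \<in> subsets_of_card B m" for A
  proof -
    have fA: "finite A" using A B unfolding subsets_of_card_def using finite_subset by blast
    have img: "(\<lambda>A'. card (A \<inter> A')) ` subsets_of_card B m \<subseteq> {..m}"
      using A card_mono[OF fA, of "A \<inter> _"] unfolding subsets_of_card_def by auto
    have "(\<Sum>A'\<in>subsets_of_card B m. \<phi> (card (A \<inter> A')))
        = (\<Sum>a\<le>m. \<Sum>A'\<in>{A'. A' \<in> subsets_of_card B m \<and> card (A \<inter> A') = a}. \<phi> (card (A \<inter> A')))"
      by (rule sum.group[symmetric, OF U_finite[OF B] _ img]) simp
    also have "\<dots> = (\<Sum>a\<le>m. real (card {A' \<in> subsets_of_card B m. card (A \<inter> A') = a}) * \<phi> a)"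
      by (intro sum.cong refl) simp
    also have "\<dots> = (\<Sum>a\<le>m. real ((m choose a) * ((card B - m) choose (m - a))) * \<phi> a)"
      using A B by (intro sum.cong refl, subst count_inter) (auto simp: subsets_of_card_def)
    finally show ?thesis .
  qed
  have "(\<Sum>A\<in>subsets_of_card B m. \<Sum>A'\<in>subsets_of_card B m. \<phi> (card (A \<inter> A')))
     = (\<Sum>A\<in>subsets_of_card B m. (\<Sum>a\<le>m. real ((m choose a) * ((card B - m) choose (m - a))) * \<phi> a))"
    using inner by (rule sum.cong[OF refl])
  also have "\<dots> = (\<Sum>a\<le>m. real ((card B choose m) * (m choose a) * ((card B - m) choose (m - a))) * \<phi> a)"
    using B by (simp add: U_card sum_distrib_left mult.assoc)
  finally show ?thesis .
qed

lemma conv: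
  fixes f g w :: "nat \<Rightarrow> real"
  assumes "w 0 = 0" "\<And>a. a > m \<Longrightarrow> f a = 0" "\<And>b. b > m' \<Longrightarrow> g b = 0" "m + m' \<le> M"
  shows "(\<Sum>a\<le>m. f a * (\<Sum>b\<le>m'. g b * w (a + b))) = (\<Sum>k=1..M. w k * (\<Sum>a=0..k. f a * g (k - a)))"
proof -
  have "(\<Sum>a\<le>m. f a * (\<Sum>b\<le>m'. g b * w (a + b))) = (\<Sum>(a,b)\<in>{..m} \<times> {..m'}. f a * g b * w (a + b))"
    by (simp add: sum.cartesian_product[symmetric] sum_distrib_left mult.assoc)
  also have "\<dots> = (\<Sum>(a,b)\<in>{(i,j). i + j \<le> M}. f a * g b * w (a + b))"
  proof (rule sum.mono_neutral_left)
    show "finite {(i, j). i + j \<le> M}"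
      by (rule finite_subset[of _ "{..M} \<times> {..M}"]) auto
    show "{..m} \<times> {..m'} \<subseteq> {(i, j). i + j \<le> M}" using assms(4) by auto
    show "\<forall>i\<in>{(i, j). i + j \<le> M} - {..m} \<times> {..m'}. (case i of (a, b) \<Rightarrow> f a * g b * w (a + b)) = 0"
    proof (intro ballI)
      fix z assume z: "z \<in> {(i, j). i + j \<le> M} - {..m} \<times> {..m'}"
      obtain a b where ab: "z = (a, b)" by fastforce
      then have "a > m \<or> b > m'" using z by auto
      then show "(case z of (a, b) \<Rightarrow> f a * g b * w (a + b)) = 0" using assms(2,3) ab by auto
    qed
  qed
  also have "\<dots> = (\<Sum>k\<le>M. \<Sum>a\<le>k. f a * g (k - a) * w (a + (k - a)))"
    by (rule sum.triangle_reindex_eq)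
  also have "\<dots> = (\<Sum>k\<le>M. w k * (\<Sum>a=0..k. f a * g (k - a)))"
    by (intro sum.cong refl) (auto simp: sum_distrib_left atLeast0AtMost mult_ac)
  also have "\<dots> = (\<Sum>k=1..M. w k * (\<Sum>a=0..k. f a * g (k - a)))"
  proof -
    have "{..M} = insert 0 {1..M}" by auto
    then show ?thesis using assms(1) by simp
  qed
  finally show ?thesis .
qed


lemma pair_pmf_of_set:
  assumes "finite A" "A \<noteq> {}" "finite B" "B \<noteq> {}"
  shows "pair_pmf (pmf_of_set A) (pmf_of_set B) = pmf_of_set (A \<times> B)"
proof (rule pmf_eqI)
  fix z :: "'a \<times> 'b"
  obtain a b where z: "z = (a, b)" by fastforce
  show "pmf (pair_pmf (pmf_of_set A) (pmf_of_set B)) z = pmf (pmf_of_set (A \<times> B)) z"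
    using assms unfolding z by (simp add: pmf_pair card_cartesian_product indicator_def)
qed

definition wfn :: "(nat \<Rightarrow> nat \<Rightarrow> real) \<Rightarrow> nat \<Rightarrow> nat \<Rightarrow> real" where
  "wfn \<zeta> c k = (if k \<ge> 1 then \<zeta> k c - 1/2 else 0)"

definition ind :: "bool \<Rightarrow> real" where "ind b = (if b then 1 else 0)"

lemma ind_mult: "ind b * x = (if b then x else 0)" by (simp add: ind_def)

definition g4 :: "(nat \<Rightarrow> nat \<Rightarrow> real) \<Rightarrow> nat \<Rightarrow> 'a set \<Rightarrow> 'a set \<times> 'a set \<Rightarrow> 'a set \<times> 'a set \<Rightarrow> real" where
  "g4 \<zeta> c X p q = (case p of (A, B) \<Rightarrow> case q of (A', B') \<Rightarrow>
     1/2 + 1/2 * (ind (A \<inter> X \<noteq> {}) * ind (A' \<inter> X \<noteq> {}))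
     + ind (A \<inter> X = {}) * (ind (A' \<inter> X = {}) * wfn \<zeta> c (card (A \<inter> A') + card (B \<inter> B'))))"

lemma agree_eq:
  assumes S: "finite S" and T: "finite T" and ST: "S \<inter> T = {}" and XS: "X \<subseteq> S"
    and DR: "D y \<union> R y = S \<union> T"
  shows "agree_prob \<zeta> c D R X y F G = g4 \<zeta> c X (F \<inter> S, F \<inter> T) (G \<inter> S, G \<inter> T)"
proof -
  have FX: "F \<inter> X = (F \<inter> S) \<inter> X" "G \<inter> X = (G \<inter> S) \<inter> X" using XS by auto
  have U: "F \<inter> G \<inter> (D y \<union> R y) = (F \<inter> S \<inter> (G \<inter> S)) \<union> (F \<inter> T \<inter> (G \<inter> T))" using DR by auto
  have "card (F \<inter> G \<inter> (D y \<union> R y)) = card (F \<inter> S \<inter> (G \<inter> S)) + card (F \<inter> T \<inter> (G \<inter> T))"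
    unfolding U by (rule card_Un_disjoint) (use S T ST in auto)
  then show ?thesis
    unfolding agree_prob_def g4_def wfn_def ind_def Let_def FX by auto
qed

lemma sum_eval:
  assumes S: "finite S" and T: "finite T" and XS: "X \<subseteq> S" and cX: "card X = n"
    and cS: "card S = t" and cT: "card T = t'" and m: "m \<le> t" and m': "m' \<le> t'" and mc: "m + m' \<le> c"
  shows "measure_pmf.expectation
     (pair_pmf (pair_pmf (pmf_of_set (subsets_of_card S m)) (pmf_of_set (subsets_of_card T m')))
               (pair_pmf (pmf_of_set (subsets_of_card S m)) (pmf_of_set (subsets_of_card T m'))))
     (\<lambda>(p, q). g4 \<zeta> c X p q)
   = 1/2 + 1/2 * ((real (t choose m) - real ((t - n) choose m)) / real (t choose m))^2
     + (\<Sum>k=1..c. (\<zeta> k c - 1/2) * (\<Sum>a=0..k.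
          real (((t - n) choose m) * (m choose a) * ((t - n - m) choose (m - a))) *
          real ((t' choose m') * (m' choose (k - a)) * ((t' - m') choose (m' - (k - a))))))
       / (real (t choose m)^2 * real (t' choose m')^2)"
proof -
  define UA where "UA = subsets_of_card S m"
  define UB where "UB = subsets_of_card T m'"
  define UM where "UM = subsets_of_card (S - X) m"
  have fA: "finite UA" "UA \<noteq> {}" using S m cS U_finite U_ne unfolding UA_def by auto
  have fB: "finite UB" "UB \<noteq> {}" using T m' cT U_finite U_ne unfolding UB_def by auto
  have fX: "finite X" using S XS finite_subset by blast
  have nA: "card UA = t choose m" using S cS U_card unfolding UA_def by auto
  have nB: "card UB = t' choose m'" using T cT U_card unfolding UB_def by auto
  have cSX: "card (S - X) = t - n" using cS cX XS fX by (simp add: card_Diff_subset)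
  have nM: "card UM = (t - n) choose m" using S cSX U_card[of "S - X" m] unfolding UM_def by auto
  have UMf: "{A \<in> UA. A \<inter> X = {}} = UM" unfolding UA_def UM_def subsets_of_card_def by auto
  have nA0: "real (t choose m) \<noteq> 0" using m by simp
  have nB0: "real (t' choose m') \<noteq> 0" using m' by simp
  define cSf where "cSf a = real (((t - n) choose m) * (m choose a) * ((t - n - m) choose (m - a)))" for a
  define cTf where "cTf b = real ((t' choose m') * (m' choose b) * ((t' - m') choose (m' - b)))" for b
  let ?w = "wfn \<zeta> c"
  have "pair_pmf (pair_pmf (pmf_of_set UA) (pmf_of_set UB)) (pair_pmf (pmf_of_set UA) (pmf_of_set UB))
      = pmf_of_set ((UA \<times> UB) \<times> (UA \<times> UB))"
    using fA fB by (simp add: pair_pmf_of_set)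
  then have E: "measure_pmf.expectation
     (pair_pmf (pair_pmf (pmf_of_set UA) (pmf_of_set UB)) (pair_pmf (pmf_of_set UA) (pmf_of_set UB)))
     (\<lambda>(p, q). g4 \<zeta> c X p q)
     = (\<Sum>A\<in>UA. \<Sum>B\<in>UB. \<Sum>A'\<in>UA. \<Sum>B'\<in>UB. g4 \<zeta> c X (A, B) (A', B')) / (real (card UA) * real (card UB))^2"
    using fA fB
    by (simp add: integral_pmf_of_set card_cartesian_product sum.cartesian_product' power2_eq_square mult_ac)
  have s1: "(\<Sum>A\<in>UA. \<Sum>B\<in>UB. \<Sum>A'\<in>UA. \<Sum>B'\<in>UB. (1/2::real)) = 1/2 * (real (card UA) * real (card UB))^2"
    by (simp add: power2_eq_square mult_ac)
  have hit: "(\<Sum>A\<in>UA. ind (A \<inter> X \<noteq> {})) = real (card UA) - real (card UM)"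
  proof -
    have "(\<Sum>A\<in>UA. ind (A \<inter> X \<noteq> {})) = (\<Sum>A\<in>UA. 1 - ind (A \<inter> X = {}))"
      by (intro sum.cong refl) (simp add: ind_def)
    also have "\<dots> = real (card UA) - (\<Sum>A\<in>UA. ind (A \<inter> X = {}))"
      by (simp add: sum_subtractf)
    also have "(\<Sum>A\<in>UA. ind (A \<inter> X = {})) = real (card UM)"
      using sum.inter_filter[OF fA(1), of "\<lambda>_. (1::real)" "\<lambda>A. A \<inter> X = {}"] UMf
      by (simp add: ind_def)
    finally show ?thesis .
  qed
  have s2: "(\<Sum>A\<in>UA. \<Sum>B\<in>UB. \<Sum>A'\<in>UA. \<Sum>B'\<in>UB. 1/2 * (ind (A \<inter> X \<noteq> {}) * ind (A' \<inter> X \<noteq> {})))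
      = 1/2 * real (card UB)^2 * (real (card UA) - real (card UM))^2"
  proof -
    have "(\<Sum>A\<in>UA. \<Sum>B\<in>UB. \<Sum>A'\<in>UA. \<Sum>B'\<in>UB. 1/2 * (ind (A \<inter> X \<noteq> {}) * ind (A' \<inter> X \<noteq> {})))
       = (\<Sum>A\<in>UA. \<Sum>A'\<in>UA. real (card UB) * real (card UB) / 2 * (ind (A \<inter> X \<noteq> {}) * ind (A' \<inter> X \<noteq> {})))"
      by (simp add: sum_distrib_left sum_divide_distrib mult_ac)
    also have "\<dots> = real (card UB) * real (card UB) / 2 * ((\<Sum>A\<in>UA. ind (A \<inter> X \<noteq> {})) * (\<Sum>A'\<in>UA. ind (A' \<inter> X \<noteq> {})))"
      by (subst sum_product) (simp only: sum_distrib_left)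
    finally show ?thesis unfolding hit by (simp add: power2_eq_square)
  qed
  have fibT: "(\<Sum>B\<in>UB. \<Sum>B'\<in>UB. ?w (a0 + card (B \<inter> B'))) = (\<Sum>b\<le>m'. cTf b * ?w (a0 + b))" for a0
    using fibre[OF T, where m=m' and \<phi>="\<lambda>b. ?w (a0 + b)"] cT unfolding UB_def cTf_def by simp
  have s3: "(\<Sum>A\<in>UA. \<Sum>B\<in>UB. \<Sum>A'\<in>UA. \<Sum>B'\<in>UB. ind (A \<inter> X = {}) * (ind (A' \<inter> X = {}) * ?w (card (A \<inter> A') + card (B \<inter> B'))))
      = (\<Sum>k=1..c. (\<zeta> k c - 1/2) * (\<Sum>a=0..k. cSf a * cTf (k - a)))"
  proof -
    have "(\<Sum>A\<in>UA. \<Sum>B\<in>UB. \<Sum>A'\<in>UA. \<Sum>B'\<in>UB. ind (A \<inter> X = {}) * (ind (A' \<inter> X = {}) * ?w (card (A \<inter> A') + card (B \<inter> B'))))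
       = (\<Sum>A\<in>UA. ind (A \<inter> X = {}) * (\<Sum>A'\<in>UA. ind (A' \<inter> X = {}) * (\<Sum>B\<in>UB. \<Sum>B'\<in>UB. ?w (card (A \<inter> A') + card (B \<inter> B')))))"
      by (simp add: sum_distrib_left sum.swap[of _ UB UA])
    also have "\<dots> = (\<Sum>A\<in>UM. \<Sum>A'\<in>UM. (\<Sum>B\<in>UB. \<Sum>B'\<in>UB. ?w (card (A \<inter> A') + card (B \<inter> B'))))"
      unfolding UMf[symmetric] using fA(1)
      by (simp add: sum.inter_filter ind_mult)
    also have "\<dots> = (\<Sum>A\<in>UM. \<Sum>A'\<in>UM. (\<Sum>b\<le>m'. cTf b * ?w (card (A \<inter> A') + b)))"
      by (simp add: fibT)
    also have "\<dots> = (\<Sum>a\<le>m. cSf a * (\<Sum>b\<le>m'. cTf b * ?w (a + b)))"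
      unfolding UM_def using fibre[where B="S - X" and m=m and \<phi>="\<lambda>a. (\<Sum>b\<le>m'. cTf b * ?w (a + b))"] S cSX
      by (simp add: cSf_def mult_ac)
    also have "\<dots> = (\<Sum>k=1..c. ?w k * (\<Sum>a=0..k. cSf a * cTf (k - a)))"
      by (rule conv) (auto simp: wfn_def cSf_def cTf_def mc)
    also have "\<dots> = (\<Sum>k=1..c. (\<zeta> k c - 1/2) * (\<Sum>a=0..k. cSf a * cTf (k - a)))"
      by (intro sum.cong refl) (auto simp: wfn_def)
    finally show ?thesis .
  qed
  have tot: "(\<Sum>A\<in>UA. \<Sum>B\<in>UB. \<Sum>A'\<in>UA. \<Sum>B'\<in>UB. g4 \<zeta> c X (A, B) (A', B'))
     = 1/2 * (real (card UA) * real (card UB))^2 + 1/2 * real (card UB)^2 * (real (card UA) - real (card UM))^2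
       + (\<Sum>k=1..c. (\<zeta> k c - 1/2) * (\<Sum>a=0..k. cSf a * cTf (k - a)))"
    by (simp only: g4_def prod.case sum.distrib s1 s2 s3)
  show ?thesis
    unfolding UA_def[symmetric] UB_def[symmetric] E tot nA nB nM
    unfolding cSf_def[symmetric] cTf_def[symmetric]
    using nA0 nB0 by (simp add: field_simps power2_eq_square)
qed


lemma L_pair:
  fixes f :: "'a \<times> 'b \<Rightarrow> real"
  assumes "finite (set_pmf p)" "finite (set_pmf q)"
  shows "measure_pmf.expectation (pair_pmf p q) f = measure_pmf.expectation p (\<lambda>x. measure_pmf.expectation q (\<lambda>y. f (x, y)))"
proof -
  have "measure_pmf.expectation (pair_pmf p q) f = (\<Sum>z\<in>set_pmf p \<times> set_pmf q. f z * pmf (pair_pmf p q) z)"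
    using assms by (intro integral_measure_pmf_real) auto
  also have "\<dots> = (\<Sum>x\<in>set_pmf p. \<Sum>y\<in>set_pmf q. f (x, y) * (pmf p x * pmf q y))"
    by (simp add: sum.cartesian_product' pmf_pair)
  also have "\<dots> = (\<Sum>x\<in>set_pmf p. (\<Sum>y\<in>set_pmf q. f (x, y) * pmf q y) * pmf p x)"
    by (simp add: sum_distrib_left sum_distrib_right mult_ac)
  also have "\<dots> = measure_pmf.expectation p (\<lambda>x. measure_pmf.expectation q (\<lambda>y. f (x, y)))"
    using assms by (subst integral_measure_pmf_real[where A="set_pmf p"])
      (auto intro!: sum.cong integral_measure_pmf_real[symmetric])
  finally show ?thesis .
qed

lemma setU: "finite A \<Longrightarrow> m \<le> card A \<Longrightarrow> set_pmf (pmf_of_set (subsets_of_card A m)) = subsets_of_card A m"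
  using U_finite[of A m] U_ne[of A m] by simp

lemma side:
  assumes S: "finite S" and T: "finite T" and ST: "S \<inter> T = {}" and XS: "X \<subseteq> S" and cX: "card X = n"
    and cS: "card S = t" and cT: "card T = t'" and m: "m \<le> t" and m': "m' \<le> t'" and mc: "m + m' \<le> c"
    and DR: "D y \<union> R y = S \<union> T"
    and Mmap: "map_pmf (\<lambda>F. (F \<inter> S, F \<inter> T)) M = pair_pmf (pmf_of_set (subsets_of_card S m)) (pmf_of_set (subsets_of_card T m'))"
  shows "measure_pmf.expectation (pair_pmf M M) (\<lambda>(F, G). agree_prob \<zeta> c D R X y F G)
   = 1/2 + 1/2 * ((real (t choose m) - real ((t - n) choose m)) / real (t choose m))^2
     + (\<Sum>k=1..c. (\<zeta> k c - 1/2) * (\<Sum>a=0..k.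
          real (((t - n) choose m) * (m choose a) * ((t - n - m) choose (m - a))) *
          real ((t' choose m') * (m' choose (k - a)) * ((t' - m') choose (m' - (k - a))))))
       / (real (t choose m)^2 * real (t' choose m')^2)"
proof -
  let ?\<phi> = "\<lambda>F. (F \<inter> S, F \<inter> T)"
  have "measure_pmf.expectation (pair_pmf M M) (\<lambda>(F, G). agree_prob \<zeta> c D R X y F G)
      = measure_pmf.expectation (pair_pmf M M) (\<lambda>(F, G). g4 \<zeta> c X (?\<phi> F) (?\<phi> G))"
    using agree_eq[where D=D and R=R and y=y, OF S T ST XS DR] by simp
  also have "\<dots> = measure_pmf.expectation (map_pmf (\<lambda>(F, G). (?\<phi> F, ?\<phi> G)) (pair_pmf M M)) (\<lambda>(p, q). g4 \<zeta> c X p q)"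
    by (simp add: case_prod_beta')
  also have "map_pmf (\<lambda>(F, G). (?\<phi> F, ?\<phi> G)) (pair_pmf M M) = pair_pmf (map_pmf ?\<phi> M) (map_pmf ?\<phi> M)"
    by (rule map_pair)
  finally show ?thesis unfolding Mmap using sum_eval[OF S T XS cX cS cT m m' mc] by simp
qed


lemma model_map:
  assumes y: "y \<in> {1, 2::nat}"
    and fD: "\<And>y. y \<in> {1,2} \<Longrightarrow> finite (D y) \<and> cd \<le> card (D y)"
    and fR: "\<And>y. y \<in> {1,2} \<Longrightarrow> finite (R y) \<and> cr \<le> card (R y)"
    and D12: "D 1 \<inter> D 2 = {}" and R12: "R 1 \<inter> R 2 = {}"
    and DR: "\<And>y y'. y \<in> {1,2} \<Longrightarrow> y' \<in> {1,2} \<Longrightarrow> D y \<inter> R y' = {}"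
  shows "map_pmf (\<lambda>F. (F \<inter> D y, F \<inter> R y)) (model_pmf D R cd cr)
       = pair_pmf (pmf_of_set (subsets_of_card (D y) cd)) (pmf_of_set (subsets_of_card (R y) cr))"
proof -
  have s: "set_pmf (pmf_of_set (subsets_of_card (D 1) cd)) = subsets_of_card (D 1) cd"
          "set_pmf (pmf_of_set (subsets_of_card (D 2) cd)) = subsets_of_card (D 2) cd"
          "set_pmf (pmf_of_set (subsets_of_card (R 1) cr)) = subsets_of_card (R 1) cr"
          "set_pmf (pmf_of_set (subsets_of_card (R 2) cr)) = subsets_of_card (R 2) cr"
    using fD fR by (auto intro!: setU)
  have D1R: "D 1 \<inter> R 1 = {}" "D 1 \<inter> R 2 = {}" "D 2 \<inter> R 1 = {}" "D 2 \<inter> R 2 = {}"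
    using DR by auto
  have key: "\<And>A1 A2 B1 B2. A1 \<in> subsets_of_card (D 1) cd \<Longrightarrow> A2 \<in> subsets_of_card (D 2) cd \<Longrightarrow>
      B1 \<in> subsets_of_card (R 1) cr \<Longrightarrow> B2 \<in> subsets_of_card (R 2) cr \<Longrightarrow>
      ((A1 \<union> A2 \<union> B1 \<union> B2) \<inter> D y, (A1 \<union> A2 \<union> B1 \<union> B2) \<inter> R y) = (if y = 1 then (A1, B1) else (A2, B2))"
    using y D12 R12 D1R unfolding subsets_of_card_def by auto
  have "map_pmf (\<lambda>F. (F \<inter> D y, F \<inter> R y)) (model_pmf D R cd cr)
     = do { A1 \<leftarrow> pmf_of_set (subsets_of_card (D 1) cd);
          A2 \<leftarrow> pmf_of_set (subsets_of_card (D 2) cd);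
          B1 \<leftarrow> pmf_of_set (subsets_of_card (R 1) cr);
          B2 \<leftarrow> pmf_of_set (subsets_of_card (R 2) cr);
          return_pmf (if y = 1 then (A1, B1) else (A2, B2)) }"
    unfolding model_pmf_def map_bind_pmf map_return_pmf
    by (intro bind_pmf_cong refl) (simp only: s key)
  also have "\<dots> = pair_pmf (pmf_of_set (subsets_of_card (D y) cd)) (pmf_of_set (subsets_of_card (R y) cr))"
    using y by (auto simp: pair_pmf_def)
  finally show ?thesis .
qed


lemma fin_bind: "finite (set_pmf p) \<Longrightarrow> (\<And>x. x \<in> set_pmf p \<Longrightarrow> finite (set_pmf (f x))) \<Longrightarrow> finite (set_pmf (bind_pmf p f))"
  by simp

lemma fin_U: "finite A \<Longrightarrow> m \<le> card A \<Longrightarrow> finite (set_pmf (pmf_of_set (subsets_of_card A m)))"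
  by (simp add: setU U_finite)

lemma fin_model:
  assumes fD: "\<And>y. y \<in> {1,2} \<Longrightarrow> finite (D y) \<and> cd \<le> card (D y)"
    and fR: "\<And>y. y \<in> {1,2} \<Longrightarrow> finite (R y) \<and> cr \<le> card (R y)"
  shows "finite (set_pmf (model_pmf D R cd cr))"
  unfolding model_pmf_def using fD fR
  by (intro fin_bind fin_U) auto

lemma fin_data:
  assumes fD: "\<And>y. y \<in> {1,2} \<Longrightarrow> finite (D y) \<and> nd \<le> card (D y)"
    and fR: "\<And>y. y \<in> {1,2} \<Longrightarrow> finite (R y) \<and> nr \<le> card (R y)"
  shows "finite (set_pmf (data_pmf pd D R nd nr))"
  unfolding data_pmf_def
proof (intro fin_bind)
  show "finite (set_pmf (pmf_of_set {1, 2::nat}))" by simp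
  show "finite (set_pmf (bernoulli_pmf pd))" by (rule finite_subset[of _ UNIV]) auto
  fix y :: nat and b X assume y: "y \<in> set_pmf (pmf_of_set {1, 2})"
  then have y': "y \<in> {1,2}" by simp
  show "finite (set_pmf (return_pmf (X, y)))" by simp
  show "finite (set_pmf (if b then pmf_of_set (subsets_of_card (D y) nd) else pmf_of_set (subsets_of_card (R y) nr)))"
    using fD[OF y'] fR[OF y'] by (auto intro: fin_U)
qed

lemma data_exp:
  fixes K :: "'a set \<times> nat \<Rightarrow> real"
  assumes pd: "0 \<le> pd" "pd \<le> 1"
    and fD: "\<And>y. y \<in> {1,2} \<Longrightarrow> finite (D y) \<and> nd \<le> card (D y)"
    and fR: "\<And>y. y \<in> {1,2} \<Longrightarrow> finite (R y) \<and> nr \<le> card (R y)"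
    and KD: "\<And>y X. y \<in> {1,2} \<Longrightarrow> X \<in> subsets_of_card (D y) nd \<Longrightarrow> K (X, y) = Vd"
    and KR: "\<And>y X. y \<in> {1,2} \<Longrightarrow> X \<in> subsets_of_card (R y) nr \<Longrightarrow> K (X, y) = Vr"
  shows "measure_pmf.expectation (data_pmf pd D R nd nr) K = pd * Vd + (1 - pd) * Vr"
proof -
  have inner: "measure_pmf.expectation (bernoulli_pmf pd \<bind> (\<lambda>dom.
          (if dom then pmf_of_set (subsets_of_card (D y) nd) else pmf_of_set (subsets_of_card (R y) nr))
          \<bind> (\<lambda>X. return_pmf (X, y)))) K = pd * Vd + (1 - pd) * Vr"
    if y: "y \<in> {1,2}" for y
  proof -
    have fy: "finite (D y)" "nd \<le> card (D y)" "finite (R y)" "nr \<le> card (R y)" using fD[OF y] fR[OF y] by auto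
    have m: "(if dom then pmf_of_set (subsets_of_card (D y) nd) else pmf_of_set (subsets_of_card (R y) nr))
          \<bind> (\<lambda>X. return_pmf (X, y))
        = map_pmf (\<lambda>X. (X, y)) (if dom then pmf_of_set (subsets_of_card (D y) nd) else pmf_of_set (subsets_of_card (R y) nr))" for dom
      by (simp add: map_pmf_def)
    have ED: "measure_pmf.expectation (map_pmf (\<lambda>X. (X, y)) (pmf_of_set (subsets_of_card (D y) nd))) K = Vd"
    proof -
      have "measure_pmf.expectation (map_pmf (\<lambda>X. (X, y)) (pmf_of_set (subsets_of_card (D y) nd))) K
          = (\<Sum>X\<in>subsets_of_card (D y) nd. K (X, y)) / real (card (subsets_of_card (D y) nd))"
        using fy by (simp add: integral_pmf_of_set[OF U_ne[OF fy(1,2)] U_finite[OF fy(1)]])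
      also have "\<dots> = (\<Sum>X\<in>subsets_of_card (D y) nd. Vd) / real (card (subsets_of_card (D y) nd))"
        using KD[OF y] by simp
      also have "\<dots> = Vd" using fy U_finite[of "D y" nd] U_ne[of "D y" nd] by simp
      finally show ?thesis .
    qed
    have ER: "measure_pmf.expectation (map_pmf (\<lambda>X. (X, y)) (pmf_of_set (subsets_of_card (R y) nr))) K = Vr"
    proof -
      have "measure_pmf.expectation (map_pmf (\<lambda>X. (X, y)) (pmf_of_set (subsets_of_card (R y) nr))) K
          = (\<Sum>X\<in>subsets_of_card (R y) nr. K (X, y)) / real (card (subsets_of_card (R y) nr))"
        using fy by (simp add: integral_pmf_of_set[OF U_ne[OF fy(3,4)] U_finite[OF fy(3)]])
      also have "\<dots> = (\<Sum>X\<in>subsets_of_card (R y) nr. Vr) / real (card (subsets_of_card (R y) nr))"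
        using KR[OF y] by simp
      also have "\<dots> = Vr" using fy U_finite[of "R y" nr] U_ne[of "R y" nr] by simp
      finally show ?thesis .
    qed
    let ?g = "\<lambda>dom. map_pmf (\<lambda>X. (X, y)) (if dom then pmf_of_set (subsets_of_card (D y) nd) else pmf_of_set (subsets_of_card (R y) nr))"
    have "measure_pmf.expectation (bernoulli_pmf pd \<bind> ?g) K = (\<Sum>b\<in>UNIV. pmf (bernoulli_pmf pd) b *\<^sub>R measure_pmf.expectation (?g b) K)"
      by (rule pmf_expectation_bind) (use fy in \<open>auto intro: fin_U\<close>)
    also have "\<dots> = pd * Vd + (1 - pd) * Vr"
      using pd ED ER by (simp add: UNIV_bool)
    finally show ?thesis unfolding m .
  qed
  have fin_inner: "finite (set_pmf (bernoulli_pmf pd \<bind> (\<lambda>dom.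
          (if dom then pmf_of_set (subsets_of_card (D y) nd) else pmf_of_set (subsets_of_card (R y) nr))
          \<bind> (\<lambda>X. return_pmf (X, y)))))" if y: "y \<in> {1,2}" for y
  proof (intro fin_bind)
    show "finite (set_pmf (bernoulli_pmf pd))" by (rule finite_subset[of _ UNIV]) auto
    fix b X
    show "finite (set_pmf (return_pmf (X, y)))" by simp
    show "finite (set_pmf (if b then pmf_of_set (subsets_of_card (D y) nd) else pmf_of_set (subsets_of_card (R y) nr)))"
      using fD[OF y] fR[OF y] by (auto intro: fin_U)
  qed
  have "measure_pmf.expectation (data_pmf pd D R nd nr) K
      = (\<Sum>y\<in>{1,2::nat}. measure_pmf.expectation (bernoulli_pmf pd \<bind> (\<lambda>dom.
          (if dom then pmf_of_set (subsets_of_card (D y) nd) else pmf_of_set (subsets_of_card (R y) nr))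
          \<bind> (\<lambda>X. return_pmf (X, y)))) K /\<^sub>R real (card {1,2::nat}))"
    unfolding data_pmf_def
    apply (rule pmf_expectation_bind_pmf_of_set)
      apply simp
     apply simp
    apply (erule fin_inner)
    done
  also have "\<dots> = pd * Vd + (1 - pd) * Vr" using inner by simp
  finally show ?thesis .
qed


lemma bnm_nat: "bnm (int n) (int k) = real (n choose k)"
  unfolding bnm_def by (auto simp: binomial_eq_0)

lemma binom_ratio:
  fixes td nd cd :: nat
  assumes "nd \<le> td" "cd \<le> td"
  shows "real ((td - nd) choose cd) / real (td choose cd) = real ((td - cd) choose nd) / real (td choose nd)"
proof (cases "nd + cd \<le> td")
  case True
  have e1: "(td choose (nd + cd)) * ((nd + cd) choose nd) = (td choose nd) * ((td - nd) choose cd)"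
    using choose_mult[of nd "nd + cd" td] True by simp
  have e2: "(td choose (nd + cd)) * ((nd + cd) choose cd) = (td choose cd) * ((td - cd) choose nd)"
    using choose_mult[of cd "nd + cd" td] True by simp
  have e3: "(nd + cd) choose nd = (nd + cd) choose cd"
    using binomial_symmetric[of nd "nd + cd"] by simp
  have "(td choose nd) * ((td - nd) choose cd) = (td choose cd) * ((td - cd) choose nd)"
    using e1 e2 e3 by simp
  then have "real (td choose nd) * real ((td - nd) choose cd) = real (td choose cd) * real ((td - cd) choose nd)"
    by (metis of_nat_mult)
  moreover have "real (td choose cd) \<noteq> 0" "real (td choose nd) \<noteq> 0" using assms by auto
  ultimately show ?thesis by (simp add: field_simps)
next
  case False
  then have "td - nd < cd" "td - cd < nd" using assms by auto
  then show ?thesis by (simp add: binomial_eq_0)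
qed

lemma hyp_term:
  fixes N m a :: nat
  shows "bnm (int m) (int a) * bnm (int N - int m) (int m - int a) * real (N choose m)
       = real ((N choose m) * (m choose a) * ((N - m) choose (m - a)))"
proof (cases "m \<le> N")
  case True
  show ?thesis
  proof (cases "a \<le> m")
    case True
    have h1: "int N - int m = int (N - m)" "int m - int a = int (m - a)" using \<open>m \<le> N\<close> True by auto
    have e: "bnm (int N - int m) (int m - int a) = real ((N - m) choose (m - a))"
      unfolding h1 by (rule bnm_nat)
    show ?thesis unfolding e bnm_nat of_nat_mult by (simp only: mult_ac)
  next
    case False
    then show ?thesis by (simp add: bnm_nat binomial_eq_0)
  qed
next
  case False
  then show ?thesis by (simp add: binomial_eq_0)
qed

lemma term_real:
  fixes P Q Q' u v U V :: real
  assumes "u * P = U" "v * Q' = V" "Q \<noteq> 0" "Q' \<noteq> 0"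
  shows "P^2 / Q^2 * (u / P * (v / Q')) = U * V / (Q^2 * Q'^2)"
proof (cases "P = 0")
  case True
  then show ?thesis using assms by simp
next
  case False
  then show ?thesis using assms by (simp add: field_simps power2_eq_square)
qed

lemma q2_eq:
  fixes td tr nd nr cd cr k :: nat
  assumes "nd \<le> td" "nr \<le> tr" "cd \<le> td" "cr \<le> tr"
  shows "q2 pd (int td) (int tr) (int nd) (int nr) (int cd) (int cr) k
    = pd * ((\<Sum>a=0..k.
          real (((td - nd) choose cd) * (cd choose a) * ((td - nd - cd) choose (cd - a))) *
          real ((tr choose cr) * (cr choose (k - a)) * ((tr - cr) choose (cr - (k - a))))))
       / (real (td choose cd)^2 * real (tr choose cr)^2)
    + (1 - pd) * ((\<Sum>a=0..k.
          real (((tr - nr) choose cr) * (cr choose a) * ((tr - nr - cr) choose (cr - a))) *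
          real ((td choose cd) * (cd choose (k - a)) * ((td - cd) choose (cd - (k - a))))))
       / (real (tr choose cr)^2 * real (td choose cd)^2)"
proof -
  have i1: "int td - int nd = int (td - nd)" "int tr - int nr = int (tr - nr)" using assms by auto
  have Q1: "real (td choose cd) \<noteq> 0" "real (tr choose cr) \<noteq> 0" using assms by auto
  have D: "bnm (int (td - nd)) (int cd)^2 / bnm (int td) (int cd)^2 *
       (\<Sum>a=0..k. bnm (int cd) (int a) * bnm (int (td - nd) - int cd) (int cd - int a) / bnm (int (td - nd)) (int cd) *
          (bnm (int cr) (int (k - a)) * bnm (int tr - int cr) (int cr - int (k - a)) / bnm (int tr) (int cr)))
     = (\<Sum>a=0..k.
          real (((td - nd) choose cd) * (cd choose a) * ((td - nd - cd) choose (cd - a))) *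
          real ((tr choose cr) * (cr choose (k - a)) * ((tr - cr) choose (cr - (k - a))))) /
       (real (td choose cd)^2 * real (tr choose cr)^2)"
    unfolding sum_distrib_left sum_divide_distrib
  proof (intro sum.cong refl)
    fix a
    show "bnm (int (td - nd)) (int cd)^2 / bnm (int td) (int cd)^2 *
       (bnm (int cd) (int a) * bnm (int (td - nd) - int cd) (int cd - int a) / bnm (int (td - nd)) (int cd) *
          (bnm (int cr) (int (k - a)) * bnm (int tr - int cr) (int cr - int (k - a)) / bnm (int tr) (int cr)))
      = real (((td - nd) choose cd) * (cd choose a) * ((td - nd - cd) choose (cd - a))) *
          real ((tr choose cr) * (cr choose (k - a)) * ((tr - cr) choose (cr - (k - a)))) /
       (real (td choose cd)^2 * real (tr choose cr)^2)"
      unfolding bnm_nat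
      by (rule term_real[OF hyp_term[of cd a "td - nd", unfolded bnm_nat] hyp_term[of cr "k - a" tr, unfolded bnm_nat] Q1])
  qed
  have R: "bnm (int (tr - nr)) (int cr)^2 / bnm (int tr) (int cr)^2 *
       (\<Sum>a=0..k. bnm (int cd) (int a) * bnm (int td - int cd) (int cd - int a) / bnm (int td) (int cd) *
          (bnm (int cr) (int (k - a)) * bnm (int (tr - nr) - int cr) (int cr - int (k - a)) / bnm (int (tr - nr)) (int cr)))
     = (\<Sum>a=0..k.
          real (((tr - nr) choose cr) * (cr choose a) * ((tr - nr - cr) choose (cr - a))) *
          real ((td choose cd) * (cd choose (k - a)) * ((td - cd) choose (cd - (k - a))))) /
       (real (tr choose cr)^2 * real (td choose cd)^2)"
  proof -
    have rev: "(\<Sum>a=0..k. bnm (int cd) (int a) * bnm (int td - int cd) (int cd - int a) / bnm (int td) (int cd) *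
          (bnm (int cr) (int (k - a)) * bnm (int (tr - nr) - int cr) (int cr - int (k - a)) / bnm (int (tr - nr)) (int cr)))
       = (\<Sum>a=0..k. bnm (int cr) (int a) * bnm (int (tr - nr) - int cr) (int cr - int a) / bnm (int (tr - nr)) (int cr) *
          (bnm (int cd) (int (k - a)) * bnm (int td - int cd) (int cd - int (k - a)) / bnm (int td) (int cd)))"
      by (subst sum.atLeastAtMost_rev) (auto intro!: sum.cong simp: mult_ac)
    show ?thesis
      unfolding rev sum_distrib_left sum_divide_distrib
    proof (intro sum.cong refl)
      fix a
      show "bnm (int (tr - nr)) (int cr)^2 / bnm (int tr) (int cr)^2 *
         (bnm (int cr) (int a) * bnm (int (tr - nr) - int cr) (int cr - int a) / bnm (int (tr - nr)) (int cr) *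
          (bnm (int cd) (int (k - a)) * bnm (int td - int cd) (int cd - int (k - a)) / bnm (int td) (int cd)))
        = real (((tr - nr) choose cr) * (cr choose a) * ((tr - nr - cr) choose (cr - a))) *
          real ((td choose cd) * (cd choose (k - a)) * ((td - cd) choose (cd - (k - a)))) /
         (real (tr choose cr)^2 * real (td choose cd)^2)"
        unfolding bnm_nat
        by (rule term_real[OF hyp_term[of cr a "tr - nr", unfolded bnm_nat] hyp_term[of cd "k - a" td, unfolded bnm_nat] Q1(2) Q1(1)])
    qed
  qed
  have "q2 pd (int td) (int tr) (int nd) (int nr) (int cd) (int cr) k
     = pd * (bnm (int (td - nd)) (int cd)^2 / bnm (int td) (int cd)^2 *
       (\<Sum>a=0..k. bnm (int cd) (int a) * bnm (int (td - nd) - int cd) (int cd - int a) / bnm (int (td - nd)) (int cd) *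
          (bnm (int cr) (int (k - a)) * bnm (int tr - int cr) (int cr - int (k - a)) / bnm (int tr) (int cr))))
     + (1 - pd) * (bnm (int (tr - nr)) (int cr)^2 / bnm (int tr) (int cr)^2 *
       (\<Sum>a=0..k. bnm (int cd) (int a) * bnm (int td - int cd) (int cd - int a) / bnm (int td) (int cd) *
          (bnm (int cr) (int (k - a)) * bnm (int (tr - nr) - int cr) (int cr - int (k - a)) / bnm (int (tr - nr)) (int cr))))"
    unfolding q2_def Let_def i1 by (simp add: mult_ac)
  then show ?thesis unfolding D R by (simp only: times_divide_eq_right)
qed


lemma final_lin:
  fixes pd A B den den' :: real and z SDk SRk :: "nat \<Rightarrow> real"
  shows "pd * (1/2 + 1/2 * A^2 + (\<Sum>k\<in>K. z k * SDk k) / den) + (1 - pd) * (1/2 + 1/2 * B^2 + (\<Sum>k\<in>K. z k * SRk k) / den')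
    = 1/2 + 1/2 * (pd * A^2 + (1 - pd) * B^2) + (\<Sum>k\<in>K. z k * (pd * SDk k / den + (1 - pd) * SRk k / den'))"
proof -
  have e: "(\<Sum>k\<in>K. z k * (pd * SDk k / den + (1 - pd) * SRk k / den'))
     = pd * ((\<Sum>k\<in>K. z k * SDk k) / den) + (1 - pd) * ((\<Sum>k\<in>K. z k * SRk k) / den')"
    by (simp add: sum.distrib sum_distrib_left sum_divide_distrib ring_distribs mult_ac)
  have l: "pd * (1/2 + 1/2 * A^2 + a) + (1 - pd) * (1/2 + 1/2 * B^2 + b)
     = 1/2 + 1/2 * (pd * A^2 + (1 - pd) * B^2) + (pd * a + (1 - pd) * b)" for a b :: real
    by (simp add: field_simps)
  show ?thesis unfolding e by (rule l)
qed

theorem mainTheorem2: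
  fixes pd :: real and td tr nd nr cd cr :: nat
    and D R :: "nat \<Rightarrow> 'a set" and \<zeta> :: "nat \<Rightarrow> nat \<Rightarrow> real"
  assumes "0 \<le> pd" "pd \<le> 1"
    and "nd \<le> td" "nr \<le> tr" "cd \<le> td" "cr \<le> tr"
    and "\<And>y. y \<in> {1,2} \<Longrightarrow> finite (D y) \<and> card (D y) = td"
    and "\<And>y. y \<in> {1,2} \<Longrightarrow> finite (R y) \<and> card (R y) = tr"
    and "D 1 \<inter> D 2 = {}" "R 1 \<inter> R 2 = {}"
    and "\<And>y y'. y \<in> {1,2} \<Longrightarrow> y' \<in> {1,2} \<Longrightarrow> D y \<inter> R y' = {}"
    and "\<And>k m. 0 \<le> \<zeta> k m \<and> \<zeta> k m \<le> 1"
  shows "Agr \<zeta> pd D R nd nr cd cr =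
           1/2 + 1/2 * q1 pd (int td) (int tr) (int nd) (int nr) (int cd) (int cr)
           + (\<Sum>k = 1..2 * (cd + cr).
                (\<zeta> k (2 * (cd + cr)) - 1/2) *
                q2 pd (int td) (int tr) (int nd) (int nr) (int cd) (int cr) k)"
proof -
  define c where "c = 2 * (cd + cr)"
  define M where "M = model_pmf D R cd cr"
  define SDk where "SDk k = (\<Sum>a=0..k.
          real (((td - nd) choose cd) * (cd choose a) * ((td - nd - cd) choose (cd - a))) *
          real ((tr choose cr) * (cr choose (k - a)) * ((tr - cr) choose (cr - (k - a)))))" for k
  define SRk where "SRk k = (\<Sum>a=0..k.
          real (((tr - nr) choose cr) * (cr choose a) * ((tr - nr - cr) choose (cr - a))) *
          real ((td choose cd) * (cd choose (k - a)) * ((td - cd) choose (cd - (k - a)))))" for k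
  define den where "den = real (td choose cd)^2 * real (tr choose cr)^2"
  define den' where "den' = real (tr choose cr)^2 * real (td choose cd)^2"
  define Vd where "Vd = 1/2 + 1/2 * ((real (td choose cd) - real ((td - nd) choose cd)) / real (td choose cd))^2
     + (\<Sum>k=1..c. (\<zeta> k c - 1/2) * SDk k) / den"
  define Vr where "Vr = 1/2 + 1/2 * ((real (tr choose cr) - real ((tr - nr) choose cr)) / real (tr choose cr))^2
     + (\<Sum>k=1..c. (\<zeta> k c - 1/2) * SRk k) / den'"
  have fD: "\<And>y. y \<in> {1,2} \<Longrightarrow> finite (D y) \<and> cd \<le> card (D y)" using assms(7,5) by auto
  have fR: "\<And>y. y \<in> {1,2} \<Longrightarrow> finite (R y) \<and> cr \<le> card (R y)" using assms(8,6) by auto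
  have fD': "\<And>y. y \<in> {1,2} \<Longrightarrow> finite (D y) \<and> nd \<le> card (D y)" using assms(7,3) by auto
  have fR': "\<And>y. y \<in> {1,2} \<Longrightarrow> finite (R y) \<and> nr \<le> card (R y)" using assms(8,4) by auto
  have fM: "finite (set_pmf M)" unfolding M_def by (rule fin_model[OF fD fR])
  have fMM: "finite (set_pmf (pair_pmf M M))" using fM by simp
  have fdat: "finite (set_pmf (data_pmf pd D R nd nr))" by (rule fin_data[OF fD' fR'])
  have mc: "cd + cr \<le> c" unfolding c_def by simp
  have "Agr \<zeta> pd D R nd nr cd cr = measure_pmf.expectation (data_pmf pd D R nd nr)
      (\<lambda>d. measure_pmf.expectation (pair_pmf M M)
         (\<lambda>z. (\<lambda>((X, y), (F, G)). agree_prob \<zeta> c D R X y F G) (d, z)))"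
    unfolding Agr_def c_def M_def by (rule L_pair[OF fdat fMM[unfolded M_def]])
  also have "\<dots> = pd * Vd + (1 - pd) * Vr"
  proof (rule data_exp[OF assms(1,2) fD' fR'])
    fix y X assume y: "y \<in> {1::nat, 2}" and X: "X \<in> subsets_of_card (D y) nd"
    have Dy: "finite (D y)" "card (D y) = td" using assms(7)[OF y] by auto
    have Ry: "finite (R y)" "card (R y) = tr" using assms(8)[OF y] by auto
    have XD: "X \<subseteq> D y" "card X = nd" using X unfolding subsets_of_card_def by auto
    have "measure_pmf.expectation (pair_pmf M M) (\<lambda>(F, G). agree_prob \<zeta> c D R X y F G) = Vd"
      unfolding Vd_def SDk_def den_def
      by (rule side[where D=D and R=R and y=y and M=M, OF Dy(1) Ry(1) assms(11)[OF y y] XD Dy(2) Ry(2) assms(5,6) mc refl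
            model_map[OF y fD fR assms(9,10,11), folded M_def]])
    then show "(\<lambda>d. measure_pmf.expectation (pair_pmf M M)
         (\<lambda>z. (\<lambda>((X, y), (F, G)). agree_prob \<zeta> c D R X y F G) (d, z))) (X, y) = Vd"
      by (simp only: prod.case)
  next
    fix y X assume y: "y \<in> {1::nat, 2}" and X: "X \<in> subsets_of_card (R y) nr"
    have Dy: "finite (D y)" "card (D y) = td" using assms(7)[OF y] by auto
    have Ry: "finite (R y)" "card (R y) = tr" using assms(8)[OF y] by auto
    have RD: "R y \<inter> D y = {}" using assms(11)[OF y y] by auto
    have Mm: "map_pmf (\<lambda>F. (F \<inter> R y, F \<inter> D y)) M
       = pair_pmf (pmf_of_set (subsets_of_card (R y) cr)) (pmf_of_set (subsets_of_card (D y) cd))"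
    proof -
      have "map_pmf (\<lambda>F. (F \<inter> R y, F \<inter> D y)) M = map_pmf (\<lambda>(x, y). (y, x)) (map_pmf (\<lambda>F. (F \<inter> D y, F \<inter> R y)) M)"
        by (simp add: pmf.map_comp o_def)
      also have "\<dots> = map_pmf (\<lambda>(x, y). (y, x)) (pair_pmf (pmf_of_set (subsets_of_card (D y) cd)) (pmf_of_set (subsets_of_card (R y) cr)))"
        unfolding M_def using model_map[OF y fD fR assms(9,10,11)] by simp
      also have "\<dots> = pair_pmf (pmf_of_set (subsets_of_card (R y) cr)) (pmf_of_set (subsets_of_card (D y) cd))"
        by (rule pair_commute_pmf[symmetric])
      finally show ?thesis .
    qed
    have XR: "X \<subseteq> R y" "card X = nr" using X unfolding subsets_of_card_def by auto
    have mc': "cr + cd \<le> c" using mc by simp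
    have "measure_pmf.expectation (pair_pmf M M) (\<lambda>(F, G). agree_prob \<zeta> c D R X y F G) = Vr"
      unfolding Vr_def SRk_def den'_def
      by (rule side[where D=D and R=R and y=y and M=M, OF Ry(1) Dy(1) RD XR Ry(2) Dy(2) assms(6,5) mc' Un_commute Mm])
    then show "(\<lambda>d. measure_pmf.expectation (pair_pmf M M)
         (\<lambda>z. (\<lambda>((X, y), (F, G)). agree_prob \<zeta> c D R X y F G) (d, z))) (X, y) = Vr"
      by (simp only: prod.case)
  qed
  also have "\<dots> = 1/2 + 1/2 * q1 pd (int td) (int tr) (int nd) (int nr) (int cd) (int cr)
           + (\<Sum>k = 1..c. (\<zeta> k c - 1/2) * q2 pd (int td) (int tr) (int nd) (int nr) (int cd) (int cr) k)"
  proof -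
    have Y: "real (td choose cd) \<noteq> 0" "real (tr choose cr) \<noteq> 0" using assms(5,6) by auto
    have i2: "int td - int cd = int (td - cd)" "int tr - int cr = int (tr - cr)" using assms(5,6) by auto
    have q1e: "q1 pd (int td) (int tr) (int nd) (int nr) (int cd) (int cr)
       = pd * (1 - real ((td - nd) choose cd) / real (td choose cd))^2
         + (1 - pd) * (1 - real ((tr - nr) choose cr) / real (tr choose cr))^2"
      unfolding q1_def i2 bnm_nat
      using binom_ratio[OF assms(3,5)] binom_ratio[OF assms(4,6)] by simp
    have r: "(real (td choose cd) - real ((td - nd) choose cd)) / real (td choose cd) = 1 - real ((td - nd) choose cd) / real (td choose cd)"
            "(real (tr choose cr) - real ((tr - nr) choose cr)) / real (tr choose cr) = 1 - real ((tr - nr) choose cr) / real (tr choose cr)"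
      using Y by (simp_all add: diff_divide_distrib)
    have q2e: "(\<Sum>k = 1..c. (\<zeta> k c - 1/2) * q2 pd (int td) (int tr) (int nd) (int nr) (int cd) (int cr) k)
       = (\<Sum>k = 1..c. (\<zeta> k c - 1/2) * (pd * SDk k / den + (1 - pd) * SRk k / den'))"
      unfolding SDk_def SRk_def den_def den'_def
      by (intro sum.cong refl) (simp only: q2_eq[OF assms(3-6)])
    show ?thesis
      unfolding q1e q2e Vd_def Vr_def r by (rule final_lin)
  qed
  finally show ?thesis unfolding c_def .
qed

end
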